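(* Fix $k\in\mathbb{N}$ and positive constants $b_0,b_1,b_2,\lambda_0,\lambda_1$. There exists $C_1>0$ depending only on $b_0,b_1,\lambda_0,\lambda_1$ (and the fixed $k$) such that the following holds. Let $T\geq10$, $\ell<r$, $a^\pm\in\mathbb{R}^k$, $g:[\ell,r]\to\mathbb{R}$ Lipschitz with $g(\ell)=g(r)=0$, and $P\subset(\ell,r)$ finite, with $P'=P\cap[\ell+T^{1/2},r-T^{1/2}]$ non-empty. Suppose that $r-\ell\leq b_0T$, $|P|\leq b_0T$, $|g(x)-g(y)|\leq b_1T|x-y|$ for all $x,y$, $a^\pm_j-a^\pm_{j+1}\geq\lambda_0T^{1/2}$ for $j\in\{1,\dots,k-1\}$, $a^-_k-g(\ell)\geq\lambda_1T$, $a^+_k-g(r)\geq\lambda_1T$, $a^-_1-g(\ell)\leq b_2T^2$, $a^+_1-g(r)\leq b_2T^2$. Then $\mathbb{E}_{\mathrm{free}}[W'_+]\geq C_1^{-1}e^{-C_1T^3}$.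
   Context: $\mathbb{P}_{\mathrm{free}}$ (expectation $\mathbb{E}_{\mathrm{free}}$) is the law of $k$ independent Brownian bridges (diffusion parameter one) $\mathcal{L}=(\mathcal{L}_1,\dots,\mathcal{L}_k)$ on $[\ell,r]$ with $\mathcal{L}_j(\ell)=a^-_j$, $\mathcal{L}_j(r)=a^+_j$. $W'_+(\mathcal{L})=1$ if for all $p\in P'$ one has $\mathcal{L}_k(p)>g(p)$ and $\mathcal{L}_j(p)>\mathcal{L}_{j+1}(p)$ for all $j\in\{1,\dots,k-1\}$, and $0$ otherwise. *)

theory Defs
  imports "HOL-Probability.Probability"
begin

definition heat :: "real \<Rightarrow> real \<Rightarrow> real" where
  "heat s y = exp (- (y\<^sup>2) / (2 * s)) / sqrt (2 * pi * s)"

text \<open>Finite-dimensional density of a Brownian bridge (diffusion parameter one)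
  on [l,r] from a at time l to b at time r: joint Lebesgue density of the values
  xs at the strictly increasing interior times ts.\<close>
definition bridge_fdd_density ::
  "real \<Rightarrow> real \<Rightarrow> real \<Rightarrow> real \<Rightarrow> real list \<Rightarrow> real list \<Rightarrow> real" where
  "bridge_fdd_density l r a b ts xs =
     (let tt = l # ts @ [r]; xx = a # xs @ [b] in
       (\<Prod>i<length ts + 1. heat (tt ! (i+1) - tt ! i) (xx ! (i+1) - xx ! i))
       / heat (r - l) (b - a))"

text \<open>The event W'_+ evaluated on the values x (j,p) = L_j(p), j in {1..k}, p in P'.\<close>
definition W_plus' ::
  "nat \<Rightarrow> (real \<Rightarrow> real) \<Rightarrow> real set \<Rightarrow> (nat \<times> real \<Rightarrow> real) \<Rightarrow> bool" where
  "W_plus' k g P' x \<longleftrightarrow>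
     (\<forall>p\<in>P'. x (k, p) > g p \<and> (\<forall>j\<in>{1..<k}. x (j, p) > x (j+1, p)))"

text \<open>E_free[W'_+]: expectation of W'_+ under k independent Brownian bridges
  L_j on [l,r] with L_j(l) = am j, L_j(r) = ap j.  Since W'_+ only depends on the
  values at the finitely many points of P', the expectation is the integral of the
  indicator against the joint finite-dimensional density of these values.\<close>
definition E_free_W ::
  "nat \<Rightarrow> real \<Rightarrow> real \<Rightarrow> (nat \<Rightarrow> real) \<Rightarrow> (nat \<Rightarrow> real) \<Rightarrow> (real \<Rightarrow> real) \<Rightarrow> real set \<Rightarrow> ennreal"
  where
  "E_free_W k l r am ap g P' =
     (let ts = sorted_list_of_set P' in
       \<integral>\<^sup>+ x. ennreal ((\<Prod>j\<in>{1..k}. bridge_fdd_density l r (am j) (ap j) ts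
                          (map (\<lambda>p. x (j, p)) ts))
                   * (if W_plus' k g P' x then 1 else 0))
         \<partial>(PiM ({1..k} \<times> P') (\<lambda>_. lborel)))"

end

theory Submission
  imports Defs
begin


lemma psf_lborel: "product_sigma_finite (\<lambda>_::'i. (lborel::real measure))"
  unfolding product_sigma_finite_def by (simp add: lborel.sigma_finite_measure_axioms)

lemma chain_meas:
  fixes J :: "'i set" and pr :: "'i \<Rightarrow> 'i"
    and hasp :: "'i \<Rightarrow> bool" and base :: "'i \<Rightarrow> real"
    and \<phi> :: "'i \<Rightarrow> real \<Rightarrow> ennreal"
  assumes meas: "\<And>e. \<phi> e \<in> borel_measurable borel"
    and H: "\<forall>e\<in>J. hasp e \<longrightarrow> pr e \<in> J"
  shows "(\<lambda>x. \<Prod>e\<in>J. \<phi> e (x e - (if hasp e then x (pr e) else base e))) \<in> borel_measurable (PiM J (\<lambda>_. lborel))"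
proof -
  have "(\<lambda>x. \<phi> e (x e - (if hasp e then x (pr e) else base e))) \<in> borel_measurable (PiM J (\<lambda>_. lborel))"
    if "e \<in> J" for e
  proof (cases "hasp e")
    case True
    then have "pr e \<in> J" using \<open>e \<in> J\<close> H by auto
    then show ?thesis using True \<open>e \<in> J\<close>
      by (simp, intro measurable_compose[OF _ meas] borel_measurable_diff measurable_component_singleton) auto
  next
    case False
    then show ?thesis using \<open>e \<in> J\<close>
      by (simp, intro measurable_compose[OF _ meas] borel_measurable_diff measurable_component_singleton) auto
  qed
  then show ?thesis by (intro borel_measurable_prod_ennreal) auto
qed

lemma chain_lower:
  fixes I :: "'i set" and rank :: "'i \<Rightarrow> real" and pr :: "'i \<Rightarrow> 'i"
    and hasp :: "'i \<Rightarrow> bool" and base :: "'i \<Rightarrow> real"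
    and \<phi> :: "'i \<Rightarrow> real \<Rightarrow> ennreal" and c :: "'i \<Rightarrow> ennreal"
  assumes fin: "finite I"
    and meas: "\<And>e. \<phi> e \<in> borel_measurable borel"
    and lb: "\<And>e. e \<in> I \<Longrightarrow> c e \<le> (\<integral>\<^sup>+u. \<phi> e u \<partial>lborel)"
  shows "(\<forall>e\<in>I. hasp e \<longrightarrow> pr e \<in> I \<and> rank (pr e) < rank e) \<longrightarrow>
     (\<Prod>e\<in>I. c e) \<le> (\<integral>\<^sup>+x. (\<Prod>e\<in>I. \<phi> e (x e - (if hasp e then x (pr e) else base e)))
        \<partial>PiM I (\<lambda>_. lborel))"
  using fin lb
proof (induction I rule: finite_ranking_induct[where f=rank])
  case empty
  then show ?case by (simp add: PiM_empty)
next
  case (insert m S)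
  interpret product_sigma_finite "\<lambda>_::'i. (lborel::real measure)" by (rule psf_lborel)
  show ?case
  proof
    assume H: "\<forall>e\<in>insert m S. hasp e \<longrightarrow> pr e \<in> insert m S \<and> rank (pr e) < rank e"
    show "(\<Prod>e\<in>insert m S. c e) \<le> (\<integral>\<^sup>+x. (\<Prod>e\<in>insert m S. \<phi> e (x e - (if hasp e then x (pr e) else base e))) \<partial>PiM (insert m S) (\<lambda>_. lborel))"
    proof (cases "m \<in> S")
      case True
      then have "insert m S = S" by auto
      then show ?thesis using insert H by simp
    next
      case mS: False
      have HS: "\<forall>e\<in>S. hasp e \<longrightarrow> pr e \<in> S \<and> rank (pr e) < rank e"
      proof (intro ballI impI)
        fix e assume e: "e \<in> S" "hasp e"
        then have "pr e \<in> insert m S" "rank (pr e) < rank e" using H by auto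
        moreover have "rank e \<le> rank m" using insert(2) e by auto
        ultimately show "pr e \<in> S \<and> rank (pr e) < rank e" by auto
      qed
      have IH: "(\<Prod>e\<in>S. c e) \<le> (\<integral>\<^sup>+x. (\<Prod>e\<in>S. \<phi> e (x e - (if hasp e then x (pr e) else base e))) \<partial>PiM S (\<lambda>_. lborel))"
        using insert.IH insert.prems HS by auto
      define F where "F = (\<lambda>J x. (\<Prod>e\<in>J. \<phi> e (x e - (if hasp e then x (pr e) else base e))))"
      have Fm: "F J \<in> borel_measurable (PiM J (\<lambda>_. lborel))"
        if "\<forall>e\<in>J. hasp e \<longrightarrow> pr e \<in> J" for J
      proof -
        have "(\<lambda>x. \<phi> e (x e - (if hasp e then x (pr e) else base e))) \<in> borel_measurable (PiM J (\<lambda>_. lborel))"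
          if "e \<in> J" for e
        proof (cases "hasp e")
          case True
          then have "pr e \<in> J" using \<open>e \<in> J\<close> \<open>\<forall>e\<in>J. hasp e \<longrightarrow> pr e \<in> J\<close> by auto
          then show ?thesis using True \<open>e \<in> J\<close>
            by (simp, intro measurable_compose[OF _ meas] borel_measurable_diff measurable_component_singleton) auto
        next
          case False
          then show ?thesis using \<open>e \<in> J\<close>
            by (simp, intro measurable_compose[OF _ meas] borel_measurable_diff measurable_component_singleton) auto
        qed
        then show ?thesis unfolding F_def by (intro borel_measurable_prod_ennreal) auto
      qed
      have FmS: "F S \<in> borel_measurable (PiM S (\<lambda>_. lborel))" using Fm HS by auto
      have FmI: "F (insert m S) \<in> borel_measurable (PiM (insert m S) (\<lambda>_. lborel))" using Fm H by auto
      define bm where "bm = (\<lambda>x. if hasp m then x (pr m) else base m)"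
      have prm: "hasp m \<Longrightarrow> pr m \<noteq> m" using H by auto
      have inner: "(\<integral>\<^sup>+y. F (insert m S) (x(m:=y)) \<partial>lborel) \<ge> F S x * c m" for x
      proof -
        have eq: "F (insert m S) (x(m:=y)) = \<phi> m (y - bm x) * F S x" for y
        proof -
          have "F S (x(m:=y)) = F S x" unfolding F_def
          proof (rule prod.cong[OF refl])
            fix e assume e: "e \<in> S"
            then have "e \<noteq> m" using mS by auto
            moreover have "hasp e \<Longrightarrow> pr e \<noteq> m" using HS e mS by auto
            ultimately show "\<phi> e ((x(m := y)) e - (if hasp e then (x(m := y)) (pr e) else base e)) =
              \<phi> e (x e - (if hasp e then x (pr e) else base e))" by auto
          qed
          moreover have "F (insert m S) (x(m:=y)) = \<phi> m (y - bm x) * F S (x(m:=y))"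
            unfolding F_def bm_def using mS insert(1) prm by (simp add: prod.insert)
          ultimately show ?thesis by simp
        qed
        have tr: "(\<integral>\<^sup>+y. \<phi> m (y - bm x) \<partial>lborel) = (\<integral>\<^sup>+u. \<phi> m u \<partial>lborel)"
          using nn_integral_real_affine[OF meas[of m], of 1 "- bm x"] by simp
        have "(\<integral>\<^sup>+y. F (insert m S) (x(m:=y)) \<partial>lborel) = (\<integral>\<^sup>+y. \<phi> m (y - bm x) * F S x \<partial>lborel)"
          using eq by simp
        also have "\<dots> = (\<integral>\<^sup>+y. \<phi> m (y - bm x) \<partial>lborel) * F S x"
          by (rule nn_integral_multc) (intro measurable_compose[OF _ meas] borel_measurable_diff, auto)
        also have "\<dots> \<ge> c m * F S x" using tr insert.prems[of m] by (simp add: mult_right_mono)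
        finally show ?thesis by (simp add: mult.commute)
      qed
      have e1: "(\<integral>\<^sup>+x. F (insert m S) x \<partial>PiM (insert m S) (\<lambda>_. lborel))
          = (\<integral>\<^sup>+x. (\<integral>\<^sup>+y. F (insert m S) (x(m:=y)) \<partial>lborel) \<partial>PiM S (\<lambda>_. lborel))"
        by (rule product_nn_integral_insert[OF insert(1) mS FmI])
      have e2: "(\<integral>\<^sup>+x. F S x * c m \<partial>PiM S (\<lambda>_. lborel)) \<le> (\<integral>\<^sup>+x. (\<integral>\<^sup>+y. F (insert m S) (x(m:=y)) \<partial>lborel) \<partial>PiM S (\<lambda>_. lborel))"
        by (intro nn_integral_mono inner)
      have e3: "(\<integral>\<^sup>+x. F S x * c m \<partial>PiM S (\<lambda>_. lborel)) = (\<integral>\<^sup>+x. F S x \<partial>PiM S (\<lambda>_. lborel)) * c m"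
        by (rule nn_integral_multc[OF FmS])
      have e4: "(\<Prod>e\<in>S. c e) * c m \<le> (\<integral>\<^sup>+x. F S x \<partial>PiM S (\<lambda>_. lborel)) * c m" using IH unfolding F_def by (simp add: mult_right_mono)
      have "(\<Prod>e\<in>insert m S. c e) \<le> (\<integral>\<^sup>+x. F (insert m S) x \<partial>PiM (insert m S) (\<lambda>_. lborel))"
        using e1 e2 e3 e4 mS insert(1) by (simp add: prod.insert mult.commute)
      then show ?thesis unfolding F_def .
    qed
  qed
qed
lemma chain_lower_K:
  fixes I :: "'i set" and rank :: "'i \<Rightarrow> real" and pr :: "'i \<Rightarrow> 'i"
    and hasp :: "'i \<Rightarrow> bool" and base :: "'i \<Rightarrow> real"
    and \<phi> :: "'i \<Rightarrow> real \<Rightarrow> ennreal" and c :: "'i \<Rightarrow> ennreal"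
  assumes fin: "finite I"
    and meas: "\<And>e. \<phi> e \<in> borel_measurable borel"
    and lb: "\<And>e. e \<in> I \<Longrightarrow> c e \<le> (\<integral>\<^sup>+u. \<phi> e u \<partial>lborel)"
    and H: "\<forall>e\<in>I. hasp e \<longrightarrow> pr e \<in> I \<and> rank (pr e) < rank e"
  shows "K * (\<Prod>e\<in>I. c e) \<le> (\<integral>\<^sup>+x. K * (\<Prod>e\<in>I. \<phi> e (x e - (if hasp e then x (pr e) else base e)))
        \<partial>PiM I (\<lambda>_. lborel))"
proof -
  have "(\<Prod>e\<in>I. c e) \<le> (\<integral>\<^sup>+x. (\<Prod>e\<in>I. \<phi> e (x e - (if hasp e then x (pr e) else base e)))
        \<partial>PiM I (\<lambda>_. lborel))"
    using chain_lower[of I \<phi> c hasp pr rank base, OF fin meas lb] H by blast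
  moreover have "(\<integral>\<^sup>+x. K * (\<Prod>e\<in>I. \<phi> e (x e - (if hasp e then x (pr e) else base e))) \<partial>PiM I (\<lambda>_. lborel))
    = K * (\<integral>\<^sup>+x. (\<Prod>e\<in>I. \<phi> e (x e - (if hasp e then x (pr e) else base e))) \<partial>PiM I (\<lambda>_. lborel))"
    by (rule nn_integral_cmult) (rule chain_meas[OF meas], use H in auto)
  ultimately show ?thesis by (simp add: mult_left_mono)
qed




lemma curve_tube:
  fixes t X Y :: "nat \<Rightarrow> real" and n :: nat and cz W :: real
  assumes inc: "\<And>i. i \<le> n \<Longrightarrow> t i < t (Suc i)"
    and X0: "X 0 = Y 0"
    and tube: "\<And>i. i < n \<Longrightarrow> \<bar>(X (Suc i) - X i) - (Y (Suc i) - Y i)\<bar> \<le> cz * sqrt (t (Suc i) - t i)"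
    and cz: "cz \<ge> 0" and W: "cz * (real n + (t n - t 0)) / 2 \<le> W"
  shows "\<And>i. i \<le> n \<Longrightarrow> \<bar>X i - Y i\<bar> \<le> W"
proof -
  have step: "\<bar>X i - Y i\<bar> \<le> cz * (\<Sum>m<i. sqrt (t (Suc m) - t m))" if "i \<le> n" for i
    using that
  proof (induction i)
    case 0 then show ?case using X0 by simp
  next
    case (Suc i)
    have "\<bar>X (Suc i) - Y (Suc i)\<bar> \<le> \<bar>X i - Y i\<bar> + \<bar>(X (Suc i) - X i) - (Y (Suc i) - Y i)\<bar>" by linarith
    also have "\<dots> \<le> cz * (\<Sum>m<i. sqrt (t (Suc m) - t m)) + cz * sqrt (t (Suc i) - t i)"
      using Suc tube[of i] by (intro add_mono) auto
    finally show ?case by (simp add: algebra_simps)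
  qed
  have sq: "sqrt (t (Suc m) - t m) \<le> (1 + (t (Suc m) - t m)) / 2" if "m < n" for m
  proof -
    have d: "t (Suc m) - t m \<ge> 0" using inc[of m] that by auto
    have "(sqrt (t (Suc m) - t m) - 1)^2 \<ge> 0" by simp
    then have "(sqrt (t (Suc m) - t m))^2 + 1 \<ge> 2 * sqrt (t (Suc m) - t m)" by (simp add: power2_eq_square algebra_simps)
    then show ?thesis using d by simp
  qed
  have mono: "(\<Sum>m<i. sqrt (t (Suc m) - t m)) \<le> (\<Sum>m<n. sqrt (t (Suc m) - t m))" if "i \<le> n" for i
    by (rule sum_mono2) (use that inc in \<open>auto intro: less_imp_le\<close>)
  have "(\<Sum>m<n. sqrt (t (Suc m) - t m)) \<le> (\<Sum>m<n. (1 + (t (Suc m) - t m)) / 2)"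
    by (rule sum_mono) (use sq in auto)
  also have "\<dots> = (real n + (t n - t 0)) / 2"
    by (simp add: sum_divide_distrib[symmetric] sum.distrib sum_lessThan_telescope)
  finally have tot: "(\<Sum>m<n. sqrt (t (Suc m) - t m)) \<le> (real n + (t n - t 0)) / 2" .
  fix i assume "i \<le> n"
  have "\<bar>X i - Y i\<bar> \<le> cz * (\<Sum>m<n. sqrt (t (Suc m) - t m))"
    using step[OF \<open>i \<le> n\<close>] mono[OF \<open>i \<le> n\<close>] cz by (meson mult_left_mono order_trans)
  also have "\<dots> \<le> cz * ((real n + (t n - t 0)) / 2)" using tot cz by (rule mult_left_mono)
  finally show "\<bar>X i - Y i\<bar> \<le> W" using W by simp
qed

lemma convex_gt: "0 \<le> (\<theta>::real) \<Longrightarrow> \<theta> \<le> 1 \<Longrightarrow> A > c \<Longrightarrow> B > c \<Longrightarrow> A + (B - A) * \<theta> > c"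
proof -
  assume a: "0 \<le> \<theta>" "\<theta> \<le> 1" "A > c" "B > c"
  have "A + (B - A) * \<theta> = (1 - \<theta>) * A + \<theta> * B" by (simp add: algebra_simps)
  moreover have "(1 - \<theta>) * A \<ge> (1 - \<theta>) * c" using a by (intro mult_left_mono) auto
  moreover have "\<theta> * B \<ge> \<theta> * c" using a by (intro mult_left_mono) auto
  moreover have "(1 - \<theta>) * A > (1 - \<theta>) * c \<or> \<theta> * B > \<theta> * c"
    using a by (cases "\<theta> = 1") (auto intro!: mult_strict_left_mono)
  moreover have "(1 - \<theta>) * c + \<theta> * c = c" by (simp add: algebra_simps)
  ultimately show ?thesis by linarith
qed

lemma heat_pos: "s > 0 \<Longrightarrow> heat s y > 0"
  unfolding heat_def by simp

lemma sq_sum_le: "((x::real) + y)\<^sup>2 \<le> 2 * x\<^sup>2 + 2 * y\<^sup>2"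
proof -
  have "0 \<le> (x - y)\<^sup>2" by simp
  then show ?thesis unfolding power2_diff power2_sum by linarith
qed

lemma exp_ratio_aux: "(S::real) > 0 \<Longrightarrow> exp (- Q) * P / (exp (- A) / S) = exp (- (Q - A)) * (S * P)"
  by (simp add: exp_diff exp_minus divide_simps)

lemma curve_density:
  fixes t X hh Y :: "nat \<Rightarrow> real" and n :: nat and cz W L a b :: real
  assumes inc: "\<And>i. i \<le> n \<Longrightarrow> t i < t (Suc i)"
    and X0: "X 0 = a" and XN: "X (Suc n) = b"
    and hh0: "hh 0 = 0" and hhN: "hh (Suc n) = 0"
    and lip: "\<And>i. i \<le> n \<Longrightarrow> \<bar>hh (Suc i) - hh i\<bar> \<le> L * (t (Suc i) - t i)"
    and Ydef: "\<And>i. Y i = a + (b - a) / (t (Suc n) - t 0) * (t i - t 0) + hh i"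
    and tube: "\<And>i. i < n \<Longrightarrow> \<bar>(X (Suc i) - X i) - (Y (Suc i) - Y i)\<bar> \<le> cz * sqrt (t (Suc i) - t i)"
    and Wn: "\<bar>X n - Y n\<bar> \<le> W" and last: "t (Suc n) - t n \<ge> 1"
  shows "(\<Prod>i<Suc n. heat (t (Suc i) - t i) (X (Suc i) - X i)) / heat (t (Suc n) - t 0) (b - a)
    \<ge> exp (- (real n * cz\<^sup>2 + W\<^sup>2 + L\<^sup>2 * (t (Suc n) - t 0))) * (\<Prod>i<n. 1 / sqrt (2 * pi * (t (Suc i) - t i)))"
proof -
  define D where "D i = t (Suc i) - t i" for i
  define d where "d i = X (Suc i) - X i" for i
  define R where "R = t (Suc n) - t 0"
  define s where "s = (b - a) / R"
  define v where "v i = d i - s * D i" for i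
  define q where "q i = (d i)\<^sup>2 / (2 * D i)" for i
  have Dpos: "D i > 0" if "i \<le> n" for i using inc[OF that] unfolding D_def by simp
  have sumD: "(\<Sum>i<m. D i) = t m - t 0" for m unfolding D_def by (rule sum_lessThan_telescope)
  have Rpos: "R > 0"
  proof -
    have "t 0 < t (Suc 0)" using inc[of 0] by simp
    moreover have "t (Suc 0) \<le> t (Suc n)"
    proof -
      have "(\<Sum>i<Suc n. D i) \<ge> (\<Sum>i<Suc 0. D i)"
        by (rule sum_mono2) (use Dpos in \<open>auto intro: less_imp_le\<close>)
      then show ?thesis using sumD[of "Suc n"] sumD[of "Suc 0"] by simp
    qed
    ultimately show ?thesis unfolding R_def by simp
  qed
  have sumd: "(\<Sum>i<Suc n. d i) = b - a" unfolding d_def using sum_lessThan_telescope[of X "Suc n"] X0 XN by simp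
  have sumv: "(\<Sum>i<Suc n. v i) = 0"
  proof -
    have "(\<Sum>i<Suc n. v i) = (\<Sum>i<Suc n. d i) - s * (\<Sum>i<Suc n. D i)"
      unfolding v_def by (simp only: sum_subtractf sum_distrib_left)
    also have "\<dots> = 0" using sumd sumD[of "Suc n"] Rpos unfolding s_def R_def by simp
    finally show ?thesis .
  qed
  have qid: "q i = (v i)\<^sup>2 / (2 * D i) + s * v i + s\<^sup>2 * D i / 2" if "i \<le> n" for i
    using Dpos[OF that] unfolding q_def v_def by (simp add: field_simps power2_eq_square)
  have sumq: "(\<Sum>i<Suc n. q i) - (b - a)\<^sup>2 / (2 * R) = (\<Sum>i<Suc n. (v i)\<^sup>2 / (2 * D i))"
  proof -
    have "(\<Sum>i<Suc n. q i) = (\<Sum>i<Suc n. (v i)\<^sup>2 / (2 * D i)) + s * (\<Sum>i<Suc n. v i) + s\<^sup>2 * (\<Sum>i<Suc n. D i) / 2"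
    proof -
      have "(\<Sum>i<Suc n. q i) = (\<Sum>i<Suc n. (v i)\<^sup>2 / (2 * D i) + s * v i + s\<^sup>2 * D i / 2)"
        using qid by (intro sum.cong) auto
      also have "\<dots> = (\<Sum>i<Suc n. (v i)\<^sup>2 / (2 * D i)) + (\<Sum>i<Suc n. s * v i) + (\<Sum>i<Suc n. s\<^sup>2 * D i / 2)"
        by (simp only: sum.distrib)
      also have "\<dots> = (\<Sum>i<Suc n. (v i)\<^sup>2 / (2 * D i)) + s * (\<Sum>i<Suc n. v i) + s\<^sup>2 * (\<Sum>i<Suc n. D i) / 2"
        by (simp only: sum_distrib_left sum_divide_distrib)
      finally show ?thesis .
    qed
    also have "\<dots> = (\<Sum>i<Suc n. (v i)\<^sup>2 / (2 * D i)) + (b - a)\<^sup>2 / (2 * R)"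
    proof -
      have sR: "s\<^sup>2 * R / 2 = (b - a)\<^sup>2 / (2 * R)" unfolding s_def using Rpos by (simp add: power2_eq_square field_simps)
      have "(\<Sum>i<Suc n. D i) = R" using sumD[of "Suc n"] unfolding R_def .
      then show ?thesis using sumv sR by simp
    qed
    finally show ?thesis by simp
  qed
  define B where "B = real n * cz\<^sup>2 + W\<^sup>2 + L\<^sup>2 * R"
  have Ydef': "Y i = a + s * (t i - t 0) + hh i" for i unfolding Ydef s_def R_def by simp
  have Ystep: "Y (Suc i) - Y i = s * D i + (hh (Suc i) - hh i)" for i
    unfolding Ydef' D_def by (simp add: algebra_simps)
  have YN: "Y (Suc n) = b" using Ydef[of "Suc n"] hhN Rpos unfolding R_def by simp
  define z where "z i = d i - (Y (Suc i) - Y i)" for i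
  have vz: "v i = z i + (hh (Suc i) - hh i)" for i unfolding v_def z_def Ystep by simp
  have vb: "(v i)\<^sup>2 / (2 * D i) \<le> (z i)\<^sup>2 / D i + L\<^sup>2 * D i" if "i \<le> n" for i
  proof -
    have Dp: "D i > 0" using Dpos[OF that] .
    have "(v i)\<^sup>2 \<le> 2 * (z i)\<^sup>2 + 2 * (hh (Suc i) - hh i)\<^sup>2"
      unfolding vz by (rule sq_sum_le)
    moreover have "(hh (Suc i) - hh i)\<^sup>2 \<le> (L * D i)\<^sup>2"
      using lip[OF that] unfolding D_def by (metis abs_ge_zero order_trans power2_abs power_mono)
    ultimately have "(v i)\<^sup>2 \<le> 2 * (z i)\<^sup>2 + 2 * (L * D i)\<^sup>2" by linarith
    then have "(v i)\<^sup>2 / (2 * D i) \<le> (2 * (z i)\<^sup>2 + 2 * (L * D i)\<^sup>2) / (2 * D i)"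
      using Dp by (simp add: divide_right_mono)
    also have "\<dots> = (z i)\<^sup>2 / D i + L\<^sup>2 * D i" using Dp by (simp add: field_simps power2_eq_square)
    finally show ?thesis .
  qed
  have zb: "(z i)\<^sup>2 / D i \<le> cz\<^sup>2" if "i < n" for i
  proof -
    have Dp: "D i > 0" using Dpos that by simp
    have "\<bar>z i\<bar> \<le> cz * sqrt (D i)" using tube[OF that] unfolding z_def d_def D_def .
    then have "(z i)\<^sup>2 \<le> (cz * sqrt (D i))\<^sup>2" by (metis abs_ge_zero order_trans power2_abs power_mono)
    also have "\<dots> = cz\<^sup>2 * D i" using Dp by (simp add: power_mult_distrib)
    finally show ?thesis using Dp by (simp add: divide_le_eq)
  qed
  have zn: "(z n)\<^sup>2 / D n \<le> W\<^sup>2"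
  proof -
    have "z n = - (X n - Y n)" unfolding z_def d_def using XN YN by simp
    then have "(z n)\<^sup>2 \<le> W\<^sup>2" using Wn by (metis abs_ge_zero abs_minus power2_abs power_mono)
    moreover have "D n \<ge> 1" using last unfolding D_def .
    ultimately show ?thesis
    proof -
      have "(z n)\<^sup>2 / D n \<le> (z n)\<^sup>2 / 1" using \<open>D n \<ge> 1\<close> by (intro divide_left_mono) auto
      then show ?thesis using \<open>(z n)\<^sup>2 \<le> W\<^sup>2\<close> by simp
    qed
  qed
  have sumvb: "(\<Sum>i<Suc n. (v i)\<^sup>2 / (2 * D i)) \<le> B"
  proof -
    have "(\<Sum>i<Suc n. (v i)\<^sup>2 / (2 * D i)) \<le> (\<Sum>i<Suc n. (z i)\<^sup>2 / D i + L\<^sup>2 * D i)"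
      by (rule sum_mono) (use vb in auto)
    also have "\<dots> = (\<Sum>i<n. (z i)\<^sup>2 / D i) + (z n)\<^sup>2 / D n + L\<^sup>2 * (\<Sum>i<Suc n. D i)"
      by (simp add: sum.distrib sum_distrib_left[symmetric] distrib_left)
    also have "\<dots> \<le> (\<Sum>i<n. cz\<^sup>2) + W\<^sup>2 + L\<^sup>2 * R"
      using sumD[of "Suc n"] zn sum_mono[of "{..<n}" "\<lambda>i. (z i)\<^sup>2 / D i" "\<lambda>_. cz\<^sup>2"] zb
      unfolding R_def by force
    finally show ?thesis unfolding B_def by simp
  qed
  have heatD: "heat (D i) (d i) = exp (- q i) * (1 / sqrt (2 * pi * D i))" for i
    unfolding heat_def q_def by simp
  have P: "(\<Prod>i<Suc n. heat (D i) (d i)) = exp (- (\<Sum>i<Suc n. q i)) * (\<Prod>i<Suc n. 1 / sqrt (2 * pi * D i))"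
    unfolding heatD prod.distrib using exp_sum[of "{..<Suc n}" "\<lambda>i. - q i"] by (simp add: sum_negf)
  have HR: "heat R (b - a) = exp (- ((b - a)\<^sup>2 / (2 * R))) / sqrt (2 * pi * R)"
    unfolding heat_def by simp
  have pre: "sqrt (2 * pi * R) * (\<Prod>i<Suc n. 1 / sqrt (2 * pi * D i)) \<ge> (\<Prod>i<n. 1 / sqrt (2 * pi * D i))"
  proof -
    have DnR: "D n \<le> R"
    proof -
      have "(\<Sum>i<Suc n. D i) \<ge> (\<Sum>i\<in>{n}. D i)"
        by (rule sum_mono2) (use Dpos in \<open>auto intro: less_imp_le\<close>)
      then show ?thesis using sumD[of "Suc n"] unfolding R_def by simp
    qed
    have "sqrt (2 * pi * R) * (1 / sqrt (2 * pi * D n)) \<ge> 1"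
      using DnR Dpos[of n] by (simp add: le_divide_eq real_sqrt_le_mono)
    moreover have "(\<Prod>i<n. 1 / sqrt (2 * pi * D i)) \<ge> 0" by (intro prod_nonneg) (auto intro!: mult_nonneg_nonneg less_imp_le[OF Dpos])
    ultimately have "(\<Prod>i<n. 1 / sqrt (2 * pi * D i)) * 1 \<le> (\<Prod>i<n. 1 / sqrt (2 * pi * D i)) * (sqrt (2 * pi * R) * (1 / sqrt (2 * pi * D n)))"
      by (intro mult_left_mono) auto
    then show ?thesis by (simp add: algebra_simps)
  qed
  have "(\<Prod>i<Suc n. heat (D i) (d i)) / heat R (b - a)
      = exp (- ((\<Sum>i<Suc n. q i) - (b - a)\<^sup>2 / (2 * R))) * (sqrt (2 * pi * R) * (\<Prod>i<Suc n. 1 / sqrt (2 * pi * D i)))"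
    unfolding P HR using Rpos by (intro exp_ratio_aux) auto
  also have "\<dots> \<ge> exp (- B) * (\<Prod>i<n. 1 / sqrt (2 * pi * D i))"
  proof (rule mult_mono)
    show "exp (- B) \<le> exp (- ((\<Sum>i<Suc n. q i) - (b - a)\<^sup>2 / (2 * R)))" using sumq sumvb by simp
  qed (use pre in \<open>auto intro!: prod_nonneg mult_nonneg_nonneg less_imp_le[OF Dpos]\<close>)
  finally show ?thesis unfolding D_def d_def R_def B_def by simp
qed




lemma main_bound:
  fixes k :: nat and l r W c0 L :: real and am ap :: "nat \<Rightarrow> real"
    and g :: "real \<Rightarrow> real" and P' :: "real set"
  assumes k1: "k \<ge> 1" and fin: "finite P'" and ne: "P' \<noteq> {}" and sub: "P' \<subseteq> {l<..<r}"
    and lastgap: "\<And>p. p \<in> P' \<Longrightarrow> r - p \<ge> 1"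
    and gl: "g l = 0" and gr: "g r = 0" and L: "L \<ge> 0"
    and lip: "\<forall>x\<in>{l..r}. \<forall>y\<in>{l..r}. \<bar>g x - g y\<bar> \<le> L * \<bar>x - y\<bar>"
    and c0: "c0 \<ge> 0" and W: "c0 * (real (card P') + (r - l)) / 2 \<le> W"
    and ord: "\<forall>j\<in>{1..<k}. am j - am (j+1) > 2 * W \<and> ap j - ap (j+1) > 2 * W"
    and top: "am k > W" "ap k > W"
  shows "E_free_W k l r am ap g P'
     \<ge> ennreal (exp (- (real (card P') * c0\<^sup>2 + W\<^sup>2 + L\<^sup>2 * (r - l))) ^ k
                * (2 * c0 / sqrt (2 * pi)) ^ (k * card P'))"
proof -
  define ts where "ts = sorted_list_of_set P'"
  define n where "n = length ts"
  have setts: "set ts = P'" unfolding ts_def using fin by simp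
  have dist: "distinct ts" unfolding ts_def by simp
  have strict: "sorted_wrt (<) ts" unfolding ts_def by (rule strict_sorted_list_of_set)
  have ncard: "n = card P'" unfolding n_def ts_def by simp
  have npos: "n > 0" using ne fin ncard by (simp add: card_gt_0_iff)
  have lr: "l < r" using ne sub by auto
  have tsin: "i < n \<Longrightarrow> ts ! i \<in> P'" for i using setts n_def nth_mem by blast
  have tslt: "i < j \<Longrightarrow> j < n \<Longrightarrow> ts ! i < ts ! j" for i j
    using sorted_wrt_nth_less[OF strict] n_def by blast
  define tt where "tt i = (l # ts @ [r]) ! i" for i
  have tt0: "tt 0 = l" unfolding tt_def by simp
  have ttS: "i < n \<Longrightarrow> tt (Suc i) = ts ! i" for i unfolding tt_def n_def by (simp add: nth_append)
  have ttN: "tt (Suc n) = r" unfolding tt_def n_def by (simp add: nth_append)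
  have inc: "i \<le> n \<Longrightarrow> tt i < tt (Suc i)" for i
  proof -
    assume i: "i \<le> n"
    show ?thesis
    proof (cases i)
      case 0
      then show ?thesis using tt0 ttS[OF npos] tsin[OF npos] sub by auto
    next
      case (Suc m)
      show ?thesis
      proof (cases "i = n")
        case True
        then show ?thesis using Suc ttS[of m] ttN tsin[of m] sub by auto
      next
        case False
        then show ?thesis using Suc i ttS[of m] ttS[of i] tslt[of m i] by auto
      qed
    qed
  qed
  define idx where "idx p = the_inv_into {..<n} ((!) ts) p" for p
  have injts: "inj_on ((!) ts) {..<n}" using dist n_def by (intro inj_on_nth) auto
  have imgts: "(!) ts ` {..<n} = P'" using setts n_def by (auto simp: in_set_conv_nth)
  have idx1: "i < n \<Longrightarrow> idx (ts ! i) = i" for i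
    unfolding idx_def using the_inv_into_f_f[OF injts] by auto
  have idx2: "p \<in> P' \<Longrightarrow> idx p < n \<and> ts ! (idx p) = p" for p
    unfolding idx_def using the_inv_into_into[OF injts, of p "{..<n}"] f_the_inv_into_f[OF injts, of p] imgts by auto
  define h where "h p = L * min (p - l) (r - p)" for p
  define hh where "hh i = h (tt i)" for i
  have hh0: "hh 0 = 0" unfolding hh_def h_def tt0 using lr by simp
  have hhN: "hh (Suc n) = 0" unfolding hh_def h_def ttN using lr by simp
  have hlip: "\<bar>h p - h q\<bar> \<le> L * \<bar>p - q\<bar>" for p q
  proof -
    have "\<bar>min (p - l) (r - p) - min (q - l) (r - q)\<bar> \<le> \<bar>p - q\<bar>" by (simp add: abs_le_iff min_def abs_if)
    then have "L * \<bar>min (p - l) (r - p) - min (q - l) (r - q)\<bar> \<le> L * \<bar>p - q\<bar>" using L by (rule mult_left_mono)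
    then show ?thesis unfolding h_def by (simp add: abs_mult L right_diff_distrib[symmetric])
  qed
  have hhlip: "i \<le> n \<Longrightarrow> \<bar>hh (Suc i) - hh i\<bar> \<le> L * (tt (Suc i) - tt i)" for i
    using hlip[of "tt (Suc i)" "tt i"] inc[of i] unfolding hh_def by simp
  have gh: "p \<in> {l..r} \<Longrightarrow> g p \<le> h p" for p
  proof -
    assume p: "p \<in> {l..r}"
    have "l \<in> {l..r}" "r \<in> {l..r}" using lr by auto
    then have "\<bar>g p - g l\<bar> \<le> L * \<bar>p - l\<bar>" "\<bar>g p - g r\<bar> \<le> L * \<bar>p - r\<bar>" using lip p by blast+
    then have "g p \<le> L * (p - l)" "g p \<le> L * (r - p)" using p gl gr by (auto simp: abs_le_iff)
    then show ?thesis unfolding h_def by (simp add: min_def)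
  qed
  define X where "X j x i = (am j # map (\<lambda>p. x (j, p)) ts @ [ap j]) ! i" for j and x :: "nat \<times> real \<Rightarrow> real" and i
  have X0: "X j x 0 = am j" for j x unfolding X_def by simp
  have XS: "i < n \<Longrightarrow> X j x (Suc i) = x (j, ts ! i)" for i j x unfolding X_def n_def by (simp add: nth_append)
  have XN: "X j x (Suc n) = ap j" for j x unfolding X_def n_def by (simp add: nth_append)
  define Y where "Y j i = am j + (ap j - am j) / (tt (Suc n) - tt 0) * (tt i - tt 0) + hh i" for j i
  define D where "D i = tt (Suc i) - tt i" for i
  define Cc where "Cc i = 1 / sqrt (2 * pi * D i)" for i
  define w where "w i = c0 * sqrt (D i)" for i
  define cen where "cen j i = Y j (Suc i) - Y j i" for j i
  define ind where "ind j x i = (indicator {cen j i - w i .. cen j i + w i} (X j x (Suc i) - X j x i) :: real)" for j x i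
  define B where "B = real n * c0\<^sup>2 + W\<^sup>2 + L\<^sup>2 * (r - l)"
  define \<phi> where "\<phi> e u = ennreal (Cc (idx (snd e))) * indicator {cen (fst e) (idx (snd e)) - w (idx (snd e)) .. cen (fst e) (idx (snd e)) + w (idx (snd e))} u" for e u
  define I where "I = {1..k} \<times> P'"
  define hasp where "hasp e = (idx (snd e) > 0)" for e :: "nat \<times> real"
  define pr where "pr e = (fst e, ts ! (idx (snd e) - 1))" for e :: "nat \<times> real"
  define base where "base e = am (fst e)" for e :: "nat \<times> real"
  have Dpos: "i \<le> n \<Longrightarrow> D i > 0" for i using inc unfolding D_def by simp
  have dens_eq: "bridge_fdd_density l r (am j) (ap j) ts (map (\<lambda>p. x (j, p)) ts)
     = (\<Prod>i<Suc n. heat (tt (Suc i) - tt i) (X j x (Suc i) - X j x i)) / heat (tt (Suc n) - tt 0) (ap j - am j)" for j x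
    unfolding bridge_fdd_density_def Let_def tt_def X_def n_def by (simp add: nth_append)
  have prodeq: "(\<Prod>e\<in>I. \<phi> e (x e - (if hasp e then x (pr e) else base e)))
      = ennreal (\<Prod>j\<in>{1..k}. \<Prod>i<n. Cc i * ind j x i)" for x
  proof -
    have inner: "(\<Prod>p\<in>P'. \<phi> (j, p) (x (j, p) - (if hasp (j, p) then x (pr (j, p)) else base (j, p))))
       = (\<Prod>i<n. ennreal (Cc i * ind j x i))" for j
    proof -
      have "(\<Prod>p\<in>P'. \<phi> (j, p) (x (j, p) - (if hasp (j, p) then x (pr (j, p)) else base (j, p))))
        = (\<Prod>i<n. \<phi> (j, ts ! i) (x (j, ts ! i) - (if hasp (j, ts ! i) then x (pr (j, ts ! i)) else base (j, ts ! i))))"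
        using prod.reindex[OF injts, of "\<lambda>p. \<phi> (j, p) (x (j, p) - (if hasp (j, p) then x (pr (j, p)) else base (j, p)))"]
        imgts by simp
      also have "\<dots> = (\<Prod>i<n. ennreal (Cc i * ind j x i))"
      proof (rule prod.cong[OF refl])
        fix i assume "i \<in> {..<n}"
        then have i: "i < n" by simp
        have xe: "x (j, ts ! i) - (if hasp (j, ts ! i) then x (pr (j, ts ! i)) else base (j, ts ! i))
             = X j x (Suc i) - X j x i"
        proof (cases i)
          case 0
          then show ?thesis using i idx1[OF i] unfolding hasp_def base_def by (simp add: XS X0)
        next
          case (Suc m)
          then show ?thesis using i XS[of m j x] XS[of i j x] idx1[OF i] unfolding hasp_def pr_def by simp
        qed
        show "\<phi> (j, ts ! i) (x (j, ts ! i) - (if hasp (j, ts ! i) then x (pr (j, ts ! i)) else base (j, ts ! i)))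
          = ennreal (Cc i * ind j x i)"
        proof -
          have Ccnn: "Cc i \<ge> 0" unfolding Cc_def using Dpos[of i] i by simp
          have "ennreal (Cc i * ind j x i) = ennreal (Cc i) * ennreal (ind j x i)"
            using Ccnn unfolding ind_def by (intro ennreal_mult) auto
          then show ?thesis unfolding xe \<phi>_def using idx1[OF i] by (simp add: ind_def ennreal_indicator)
        qed
      qed
      finally show ?thesis .
    qed
    have "(\<Prod>e\<in>I. \<phi> e (x e - (if hasp e then x (pr e) else base e)))
       = (\<Prod>j\<in>{1..k}. \<Prod>p\<in>P'. \<phi> (j, p) (x (j, p) - (if hasp (j, p) then x (pr (j, p)) else base (j, p))))"
      unfolding I_def by (simp add: prod.cartesian_product)
    also have "\<dots> = (\<Prod>j\<in>{1..k}. \<Prod>i<n. ennreal (Cc i * ind j x i))" using inner by simp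
    also have "\<dots> = ennreal (\<Prod>j\<in>{1..k}. \<Prod>i<n. Cc i * ind j x i)"
    proof -
      have nn: "0 \<le> Cc i * ind j x i" if "i < n" for i j
        unfolding Cc_def ind_def using Dpos[of i] that by simp
      have "(\<Prod>j\<in>{1..k}. \<Prod>i<n. ennreal (Cc i * ind j x i)) = (\<Prod>j\<in>{1..k}. ennreal (\<Prod>i<n. Cc i * ind j x i))"
        by (intro prod.cong refl prod_ennreal) (use nn in auto)
      also have "\<dots> = ennreal (\<Prod>j\<in>{1..k}. \<Prod>i<n. Cc i * ind j x i)"
        by (intro prod_ennreal prod_nonneg) (use nn in auto)
      finally show ?thesis .
    qed
    finally show ?thesis .
  qed
  have Y0: "Y j 0 = am j" for j unfolding Y_def using hh0 by simp
  have ttrange: "l \<le> tt i \<and> tt i \<le> r" if iS: "i \<le> Suc n" for i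
  proof (cases i)
    case 0 then show ?thesis using tt0 lr by simp
  next
    case (Suc m)
    show ?thesis
    proof (cases "m = n")
      case True then show ?thesis using Suc ttN lr by simp
    next
      case False
      then have "m < n" using Suc iS by simp
      then show ?thesis using Suc ttS[of m] tsin[of m] sub by force
    qed
  qed
  have theta: "0 \<le> (tt i - tt 0) / (tt (Suc n) - tt 0) \<and> (tt i - tt 0) / (tt (Suc n) - tt 0) \<le> 1" if "i \<le> Suc n" for i
    using ttrange[OF that] lr tt0 ttN by (simp add: divide_le_eq_1)
  have pw: "ennreal (exp (- B) ^ k * (\<Prod>j\<in>{1..k}. \<Prod>i<n. Cc i * ind j x i))
     \<le> ennreal ((\<Prod>j\<in>{1..k}. bridge_fdd_density l r (am j) (ap j) ts (map (\<lambda>p. x (j, p)) ts))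
                   * (if W_plus' k g P' x then 1 else 0))" for x
  proof (cases "\<forall>j\<in>{1..k}. \<forall>i<n. ind j x i = 1")
    case False
    then obtain j i where ji: "j \<in> {1..k}" "i < n" "ind j x i \<noteq> 1" by auto
    then have "ind j x i = 0" unfolding ind_def by (simp add: indicator_def split: if_splits)
    then have "(\<Prod>i<n. Cc i * ind j x i) = 0" using ji by (intro prod_zero) auto
    then have z: "(\<Prod>j\<in>{1..k}. \<Prod>i<n. Cc i * ind j x i) = 0" using ji by (intro prod_zero) auto
    show ?thesis unfolding z by simp
  next
    case True
    have tube: "\<bar>(X j x (Suc i) - X j x i) - (Y j (Suc i) - Y j i)\<bar> \<le> c0 * sqrt (tt (Suc i) - tt i)"
      if "j \<in> {1..k}" "i < n" for j i
    proof -
      have "ind j x i = 1" using True that by auto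
      then have "cen j i - w i \<le> X j x (Suc i) - X j x i \<and> X j x (Suc i) - X j x i \<le> cen j i + w i"
        unfolding ind_def by (simp add: indicator_def split: if_splits)
      then show ?thesis unfolding cen_def w_def D_def by (simp add: abs_le_iff)
    qed
    have close: "\<bar>X j x i - Y j i\<bar> \<le> W" if "j \<in> {1..k}" "i \<le> n" for j i
    proof (rule curve_tube[of n tt "X j x" "Y j" c0 W])
      show "X j x 0 = Y j 0" using X0 Y0 by simp
      show "c0 * (real n + (tt n - tt 0)) / 2 \<le> W"
      proof -
        have "tt n \<le> r" using inc[of n] ttN by simp
        then have "c0 * (real n + (tt n - tt 0)) \<le> c0 * (real (card P') + (r - l))"
          using c0 ncard tt0 by (intro mult_left_mono) auto
        then show ?thesis using W by simp
      qed
    qed (use inc tube that c0 in auto)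
    have Ccnn: "i < n \<Longrightarrow> Cc i \<ge> 0" for i unfolding Cc_def using Dpos[of i] by simp
    have dj: "bridge_fdd_density l r (am j) (ap j) ts (map (\<lambda>p. x (j, p)) ts) \<ge> exp (- B) * (\<Prod>i<n. Cc i)"
      if j: "j \<in> {1..k}" for j
    proof -
      have lastg: "tt (Suc n) - tt n \<ge> 1"
      proof -
        obtain m where m: "n = Suc m" using npos by (cases n) auto
        then have "tt n = ts ! m" using ttS[of m] by simp
        then show ?thesis using lastgap[OF tsin[of m]] m ttN by simp
      qed
      have "(\<Prod>i<Suc n. heat (tt (Suc i) - tt i) (X j x (Suc i) - X j x i)) / heat (tt (Suc n) - tt 0) (ap j - am j)
        \<ge> exp (- (real n * c0\<^sup>2 + W\<^sup>2 + L\<^sup>2 * (tt (Suc n) - tt 0))) * (\<Prod>i<n. 1 / sqrt (2 * pi * (tt (Suc i) - tt i)))"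
      proof (rule curve_density[where t=tt and X="X j x" and hh=hh and Y="Y j" and n=n and cz=c0 and W=W and L=L and a="am j" and b="ap j"])
        show "\<And>i. Y j i = am j + (ap j - am j) / (tt (Suc n) - tt 0) * (tt i - tt 0) + hh i" unfolding Y_def by simp
        show "\<bar>X j x n - Y j n\<bar> \<le> W" using close[OF j, of n] by simp
      qed (use inc X0 XN hh0 hhN hhlip tube[OF j] lastg in auto)
      then show ?thesis unfolding dens_eq B_def Cc_def D_def using ttN tt0 by simp
    qed
    have theq: "Y j m = am j + (ap j - am j) * ((tt m - tt 0) / (tt (Suc n) - tt 0)) + hh m" for j m
      unfolding Y_def by simp
    have Wp: "W_plus' k g P' x"
      unfolding W_plus'_def
    proof (intro ballI conjI)
      fix p assume p: "p \<in> P'"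
      define i where "i = idx p"
      have i: "i < n" "ts ! i = p" using idx2[OF p] unfolding i_def by auto
      define \<theta> where "\<theta> = (tt (Suc i) - tt 0) / (tt (Suc n) - tt 0)"
      have th: "0 \<le> \<theta>" "\<theta> \<le> 1" using theta[of "Suc i"] i unfolding \<theta>_def by auto
      have xX: "x (j, p) = X j x (Suc i)" for j using XS[OF i(1)] i by simp
      have hp: "hh (Suc i) = h p" unfolding hh_def using ttS[OF i(1)] i by simp
      have pin: "p \<in> {l..r}" using p sub by auto
      have kk: "k \<in> {1..k}" using k1 by simp
      have Yt: "Y j (Suc i) = am j + (ap j - am j) * \<theta> + hh (Suc i)" for j
        unfolding \<theta>_def by (rule theq)
      have "am k + (ap k - am k) * \<theta> > W" using convex_gt[OF th, of W "am k" "ap k"] top by simp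
      then have "Y k (Suc i) > W + hh (Suc i)" using Yt[of k] by simp
      then show "x (k, p) > g p"
        using close[OF kk, of "Suc i"] i gh[OF pin] hp xX[of k] by (simp add: abs_le_iff)
      fix j assume j: "j \<in> {1..<k}"
      have j1: "j \<in> {1..k}" "j + 1 \<in> {1..k}" using j by auto
      have "Y j (Suc i) - Y (j+1) (Suc i) = (am j - am (j+1)) + ((ap j - ap (j+1)) - (am j - am (j+1))) * \<theta>"
        unfolding Yt by (simp add: algebra_simps)
      also have "\<dots> > 2 * W" using convex_gt[OF th] ord j by auto
      finally show "x (j, p) > x (j + 1, p)"
        using close[OF j1(1), of "Suc i"] close[OF j1(2), of "Suc i"] i xX[of j] xX[of "j+1"]
        by (simp add: abs_le_iff)
    qed
    have "exp (- B) ^ k * (\<Prod>j\<in>{1..k}. \<Prod>i<n. Cc i * ind j x i) = (\<Prod>j\<in>{1..k}. exp (- B) * (\<Prod>i<n. Cc i))"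
      using True by (simp add: prod.distrib power_mult_distrib)
    also have "\<dots> \<le> (\<Prod>j\<in>{1..k}. bridge_fdd_density l r (am j) (ap j) ts (map (\<lambda>p. x (j, p)) ts))"
      by (intro prod_mono conjI mult_nonneg_nonneg prod_nonneg dj) (use Ccnn in auto)
    finally show ?thesis using Wp by (intro ennreal_leI) simp
  qed
  define q where "q = 2 * c0 / sqrt (2 * pi)"
  have finI: "finite I" unfolding I_def using fin by simp
  have cardI: "card I = k * n" unfolding I_def ncard by (simp add: card_cartesian_product)
  have measphi: "\<phi> e \<in> borel_measurable borel" for e unfolding \<phi>_def by measurable
  have lbI: "ennreal q \<le> (\<integral>\<^sup>+u. \<phi> e u \<partial>lborel)" if e: "e \<in> I" for e
  proof -
    obtain j p where ep: "e = (j, p)" "p \<in> P'" using e unfolding I_def by auto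
    define i where "i = idx p"
    have i: "i < n" using idx2[OF ep(2)] unfolding i_def by simp
    have wnn: "w i \<ge> 0" unfolding w_def using c0 Dpos[of i] i by simp
    have "(\<integral>\<^sup>+u. \<phi> e u \<partial>lborel) = ennreal (Cc i) * emeasure lborel {cen j i - w i .. cen j i + w i}"
      unfolding \<phi>_def ep by (simp add: nn_integral_cmult_indicator i_def)
    also have "\<dots> = ennreal (Cc i) * ennreal (2 * w i)" using wnn by simp
    also have "\<dots> = ennreal (Cc i * (2 * w i))"
    proof -
      have "Cc i \<ge> 0" "2 * w i \<ge> 0" using Dpos[of i] i wnn unfolding Cc_def by auto
      then show ?thesis by (simp only: ennreal_mult)
    qed
    also have "Cc i * (2 * w i) = q"
      using Dpos[of i] i unfolding Cc_def w_def q_def by (simp add: real_sqrt_mult field_simps)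
    finally show ?thesis by simp
  qed
  have HI: "\<forall>e\<in>I. hasp e \<longrightarrow> pr e \<in> I \<and> snd (pr e) < snd e"
  proof (intro ballI impI)
    fix e assume e: "e \<in> I" "hasp e"
    obtain j p where ep: "e = (j, p)" "p \<in> P'" "j \<in> {1..k}" using e unfolding I_def by auto
    have i: "idx p < n" "ts ! idx p = p" "idx p > 0" using idx2[OF ep(2)] e(2) ep unfolding hasp_def by auto
    have "ts ! (idx p - 1) < p" using tslt[of "idx p - 1" "idx p"] i by simp
    moreover have "ts ! (idx p - 1) \<in> P'" using tsin[of "idx p - 1"] i by simp
    ultimately show "pr e \<in> I \<and> snd (pr e) < snd e" unfolding pr_def I_def using ep by auto
  qed
  have chain: "ennreal (exp (- B) ^ k) * (\<Prod>e\<in>I. ennreal q)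
     \<le> (\<integral>\<^sup>+x. ennreal (exp (- B) ^ k) * (\<Prod>e\<in>I. \<phi> e (x e - (if hasp e then x (pr e) else base e))) \<partial>PiM I (\<lambda>_. lborel))"
    by (rule chain_lower_K[OF finI measphi lbI HI])
  have pw2: "ennreal (exp (- B) ^ k) * (\<Prod>e\<in>I. \<phi> e (x e - (if hasp e then x (pr e) else base e)))
     \<le> ennreal ((\<Prod>j\<in>{1..k}. bridge_fdd_density l r (am j) (ap j) ts (map (\<lambda>p. x (j, p)) ts))
                   * (if W_plus' k g P' x then 1 else 0))" for x
  proof -
    have nn: "0 \<le> (\<Prod>j\<in>{1..k}. \<Prod>i<n. Cc i * ind j x i)"
    proof -
      have "0 \<le> Cc i * ind j x i" if "i < n" for i j
        using Dpos[of i] that unfolding Cc_def ind_def by simp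
      then show ?thesis by (intro prod_nonneg) auto
    qed
    have "ennreal (exp (- B) ^ k) * (\<Prod>e\<in>I. \<phi> e (x e - (if hasp e then x (pr e) else base e)))
        = ennreal (exp (- B) ^ k * (\<Prod>j\<in>{1..k}. \<Prod>i<n. Cc i * ind j x i))"
      unfolding prodeq using nn by (simp add: ennreal_mult)
    then show ?thesis using pw[of x] by simp
  qed
  have "E_free_W k l r am ap g P' = (\<integral>\<^sup>+x. ennreal ((\<Prod>j\<in>{1..k}. bridge_fdd_density l r (am j) (ap j) ts (map (\<lambda>p. x (j, p)) ts))
                   * (if W_plus' k g P' x then 1 else 0)) \<partial>PiM I (\<lambda>_. lborel))"
    unfolding E_free_W_def Let_def ts_def I_def by simp
  also have "\<dots> \<ge> (\<integral>\<^sup>+x. ennreal (exp (- B) ^ k) * (\<Prod>e\<in>I. \<phi> e (x e - (if hasp e then x (pr e) else base e))) \<partial>PiM I (\<lambda>_. lborel))"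
    by (intro nn_integral_mono pw2)
  finally have fin1: "E_free_W k l r am ap g P' \<ge> ennreal (exp (- B) ^ k) * (\<Prod>e\<in>I. ennreal q)"
    using chain by (meson order_trans)
  have "ennreal (exp (- B) ^ k) * (\<Prod>e\<in>I. ennreal q) = ennreal (exp (- B) ^ k * q ^ (k * n))"
    using cardI c0 unfolding q_def by (simp add: ennreal_mult ennreal_power prod_constant)
  then show ?thesis using fin1 unfolding B_def q_def ncard by simp
qed




lemma final_arith:
  fixes k n :: nat and b0 T Bv q q0 \<gamma> \<beta> C :: real
  assumes T: "T \<ge> 1" and n: "real n \<le> b0 * T" and Bv: "Bv \<le> \<beta> * T ^ 3"
    and q: "q = q0 / sqrt T" and q0: "q0 > 0" and \<gamma>: "\<gamma> = \<bar>ln q0\<bar>"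
    and C: "C = real k * \<beta> + real k * b0 * (\<gamma> + 1) + 1" and \<beta>: "\<beta> \<ge> 0" and b0: "b0 > 0"
  shows "exp (- C * T ^ 3) / C \<le> exp (- Bv) ^ k * q ^ (k * n)"
proof -
  have T3: "T ^ 3 \<ge> T" "T ^ 3 \<ge> T\<^sup>2" "T\<^sup>2 \<ge> T" using T by (auto simp: power_increasing[of 1 _ T, simplified] power2_eq_square) (simp add: power3_eq_cube)
  have a: "exp (- Bv) ^ k = exp (- (real k * Bv))" by (simp add: exp_of_nat_mult[symmetric])
  have a2: "exp (- (real k * Bv)) \<ge> exp (- (real k * \<beta> * T ^ 3))"
    using Bv by (simp add: mult_left_mono mult.assoc)
  have qpos: "q > 0" using q q0 T by simp
  have lnq: "ln q = ln q0 - ln T / 2" using q q0 T by (simp add: ln_div ln_sqrt)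
  have lnT: "ln T \<le> T" using ln_le_minus_one[of T] T by simp
  have lnq2: "ln q \<ge> - \<gamma> - T" using lnq lnT \<gamma> T by (simp add: abs_if)
  have "q ^ (k * n) = exp (real (k * n) * ln q)" by (subst exp_of_nat_mult) (use qpos in simp)
  also have "real (k * n) * ln q \<ge> real (k * n) * (- \<gamma> - T)" using lnq2 by (intro mult_left_mono) auto
  moreover have "real (k * n) * (- \<gamma> - T) \<ge> real k * (b0 * T) * (- \<gamma> - T)"
  proof -
    have "real (k * n) \<le> real k * (b0 * T)" using n by (simp add: mult_left_mono)
    moreover have "- \<gamma> - T \<le> 0" using \<gamma> T by simp
    ultimately show ?thesis by (rule mult_right_mono_neg)
  qed
  moreover have "real k * (b0 * T) * (- \<gamma> - T) \<ge> - (real k * b0 * (\<gamma> + 1) * T ^ 3)"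
  proof -
    have "b0 * T * (\<gamma> + T) \<le> b0 * (\<gamma> + 1) * T ^ 3"
    proof -
      have "T * (\<gamma> + T) = \<gamma> * T + T\<^sup>2" by (simp add: algebra_simps power2_eq_square)
      also have "\<dots> \<le> \<gamma> * T ^ 3 + T ^ 3" using T3 \<gamma> by (intro add_mono mult_left_mono) auto
      finally have "T * (\<gamma> + T) \<le> (\<gamma> + 1) * T ^ 3" by (simp add: algebra_simps)
      then show ?thesis using b0 by (simp add: mult.assoc mult_left_mono)
    qed
    then have "real k * (b0 * T * (\<gamma> + T)) \<le> real k * (b0 * (\<gamma> + 1) * T ^ 3)" by (intro mult_left_mono) auto
    then show ?thesis by (simp add: algebra_simps)
  qed
  ultimately have b: "q ^ (k * n) \<ge> exp (- (real k * b0 * (\<gamma> + 1) * T ^ 3))" by simp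
  have C1: "C \<ge> 1" using C \<beta> b0 \<gamma> by (simp add: add_nonneg_nonneg)
  have "exp (- C * T ^ 3) / C \<le> exp (- C * T ^ 3)" using C1 by (simp add: divide_le_eq)
  also have "\<dots> \<le> exp (- (real k * \<beta> * T ^ 3)) * exp (- (real k * b0 * (\<gamma> + 1) * T ^ 3))"
  proof -
    have "- C * T ^ 3 \<le> - (real k * \<beta> * T ^ 3) + - (real k * b0 * (\<gamma> + 1) * T ^ 3)"
      using C T3 T by (simp add: algebra_simps)
    then show ?thesis by (simp add: exp_add[symmetric])
  qed
  also have "\<dots> \<le> exp (- Bv) ^ k * q ^ (k * n)"
    unfolding a by (intro mult_mono a2 b) auto
  finally show ?thesis .
qed



lemma qq_aux: "(s::real) > 0 \<Longrightarrow> b0 > 0 \<Longrightarrow> z > 0 \<Longrightarrow> 2 * (m * s / 3 / (b0 * (s * s))) / z = 2 * m / (3 * b0 * z) / s"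
  by (simp add: field_simps)
lemma bv_aux: "(s::real) > 0 \<Longrightarrow> b0 > 0 \<Longrightarrow> b0 * (s * s) * (m * s / 3 / (b0 * (s * s)))\<^sup>2 = m\<^sup>2 / (9 * b0)"
  by (simp add: field_simps power2_eq_square)
lemma w_aux: "(s::real) > 0 \<Longrightarrow> (m * s / 3)\<^sup>2 = m\<^sup>2 / 9 * (s * s)"
  by (simp add: field_simps power2_eq_square)

theorem mainTheorem9:
  fixes k :: nat and b0 b1 lam0 lam1 :: real
  assumes "k \<ge> 1" and "b0 > 0" and "b1 > 0" and "lam0 > 0" and "lam1 > 0"
  shows "\<exists>C1 > 0. \<forall>(b2::real) (T::real) (l::real) (r::real) (am::nat \<Rightarrow> real)
            (ap::nat \<Rightarrow> real) (g::real \<Rightarrow> real) (P::real set).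
     b2 > 0 \<longrightarrow> T \<ge> 10 \<longrightarrow> l < r \<longrightarrow>
     g l = 0 \<longrightarrow> g r = 0 \<longrightarrow>
     finite P \<longrightarrow> P \<subseteq> {l<..<r} \<longrightarrow>
     P \<inter> {l + sqrt T .. r - sqrt T} \<noteq> {} \<longrightarrow>
     r - l \<le> b0 * T \<longrightarrow>
     real (card P) \<le> b0 * T \<longrightarrow>
     (\<forall>x\<in>{l..r}. \<forall>y\<in>{l..r}. \<bar>g x - g y\<bar> \<le> b1 * T * \<bar>x - y\<bar>) \<longrightarrow>
     (\<forall>j\<in>{1..<k}. am j - am (j+1) \<ge> lam0 * sqrt T \<and> ap j - ap (j+1) \<ge> lam0 * sqrt T) \<longrightarrow>
     am k - g l \<ge> lam1 * T \<longrightarrow> ap k - g r \<ge> lam1 * T \<longrightarrow>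
     am 1 - g l \<le> b2 * T\<^sup>2 \<longrightarrow> ap 1 - g r \<le> b2 * T\<^sup>2 \<longrightarrow>
     E_free_W k l r am ap g (P \<inter> {l + sqrt T .. r - sqrt T})
       \<ge> ennreal (exp (- C1 * T ^ 3) / C1)"
proof -
  note k1 = assms(1) and b0 = assms(2) and b1 = assms(3) and lam0 = assms(4) and lam1 = assms(5)
  define m where "m = min lam0 lam1"
  have m: "m > 0" "m \<le> lam0" "m \<le> lam1" unfolding m_def using lam0 lam1 by auto
  define q0 where "q0 = 2 * m / (3 * b0 * sqrt (2 * pi))"
  define \<gamma> where "\<gamma> = \<bar>ln q0\<bar>"
  define \<beta> where "\<beta> = m\<^sup>2 / (9 * b0) + m\<^sup>2 / 9 + b1\<^sup>2 * b0"
  define C where "C = real k * \<beta> + real k * b0 * (\<gamma> + 1) + 1"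
  have q0: "q0 > 0" unfolding q0_def using m b0 by simp
  have \<beta>: "\<beta> \<ge> 0" unfolding \<beta>_def using b0 by simp
  have Cpos: "C > 0"
  proof -
    have "real k * \<beta> \<ge> 0" "real k * b0 * (\<gamma> + 1) \<ge> 0" using \<beta> b0 unfolding \<gamma>_def by auto
    then show ?thesis unfolding C_def by linarith
  qed
  show ?thesis
  proof (intro exI[of _ C] conjI Cpos allI impI)
    fix b2 T l r :: real and am ap :: "nat \<Rightarrow> real" and g :: "real \<Rightarrow> real" and P :: "real set"
    assume b2: "b2 > 0" and T: "T \<ge> 10" and lr: "l < r" and gl: "g l = 0" and gr: "g r = 0"
      and finP: "finite P" and subP: "P \<subseteq> {l<..<r}" and ne: "P \<inter> {l + sqrt T .. r - sqrt T} \<noteq> {}"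
      and rl: "r - l \<le> b0 * T" and cardP: "real (card P) \<le> b0 * T"
      and lip: "\<forall>x\<in>{l..r}. \<forall>y\<in>{l..r}. \<bar>g x - g y\<bar> \<le> b1 * T * \<bar>x - y\<bar>"
      and ord: "\<forall>j\<in>{1..<k}. am j - am (j+1) \<ge> lam0 * sqrt T \<and> ap j - ap (j+1) \<ge> lam0 * sqrt T"
      and topm: "am k - g l \<ge> lam1 * T" and topp: "ap k - g r \<ge> lam1 * T"
      and "am 1 - g l \<le> b2 * T\<^sup>2" and "ap 1 - g r \<le> b2 * T\<^sup>2"
    define P' where "P' = P \<inter> {l + sqrt T .. r - sqrt T}"
    define W where "W = m * sqrt T / 3"
    define c0 where "c0 = W / (b0 * T)"
    define L where "L = b1 * T"
    have sT: "sqrt T \<ge> 1" "sqrt T > 0" using T by auto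
    have T1: "T \<ge> 1" using T by simp
    have sTT: "sqrt T \<le> T"
    proof -
      have "1 * T \<le> T * T" using T1 by (intro mult_right_mono) auto
      then have "sqrt T \<le> sqrt (T * T)" by (intro real_sqrt_le_mono) simp
      then show ?thesis using T1 by simp
    qed
    define s where "s = sqrt T"
    have Ts: "T = s * s" unfolding s_def using T1 by simp
    have spos: "s > 0" unfolding s_def using sT by simp
    have sW: "W = m * s / 3" unfolding W_def s_def ..
    have c0': "c0 = m * s / 3 / (b0 * (s * s))" unfolding c0_def sW Ts ..
    have finP': "finite P'" unfolding P'_def using finP by simp
    have cardP': "real (card P') \<le> b0 * T"
    proof -
      have "card P' \<le> card P" unfolding P'_def using finP by (intro card_mono) auto
      then show ?thesis using cardP by linarith
    qed
    have Wpos: "W > 0" unfolding W_def using m sT by simp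
    have c0: "c0 \<ge> 0" unfolding c0_def using Wpos b0 T by simp
    have c0W: "c0 * (b0 * T) = W" unfolding c0_def using b0 T by simp
    have mb: "E_free_W k l r am ap g P'
     \<ge> ennreal (exp (- (real (card P') * c0\<^sup>2 + W\<^sup>2 + L\<^sup>2 * (r - l))) ^ k
                * (2 * c0 / sqrt (2 * pi)) ^ (k * card P'))"
    proof (rule main_bound)
      show "k \<ge> 1" by (rule k1)
      show "finite P'" by (rule finP')
      show "P' \<noteq> {}" using ne unfolding P'_def .
      show "P' \<subseteq> {l<..<r}" using subP unfolding P'_def by auto
      show "r - p \<ge> 1" if "p \<in> P'" for p
      proof -
        have "p \<le> r - sqrt T" using that unfolding P'_def by auto
        then show ?thesis using sT(1) by linarith
      qed
      show "g l = 0" "g r = 0" by (fact gl, fact gr)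
      show "L \<ge> 0" unfolding L_def using b1 T by simp
      show "\<forall>x\<in>{l..r}. \<forall>y\<in>{l..r}. \<bar>g x - g y\<bar> \<le> L * \<bar>x - y\<bar>" using lip unfolding L_def .
      show "c0 \<ge> 0" by (rule c0)
      show "c0 * (real (card P') + (r - l)) / 2 \<le> W"
      proof -
        have "c0 * (real (card P') + (r - l)) \<le> c0 * (b0 * T + b0 * T)"
          using c0 cardP' rl by (intro mult_left_mono) (auto simp: algebra_simps)
        then show ?thesis using c0W by (simp add: algebra_simps)
      qed
      show "\<forall>j\<in>{1..<k}. am j - am (j+1) > 2 * W \<and> ap j - ap (j+1) > 2 * W"
      proof
        fix j assume "j \<in> {1..<k}"
        then have "am j - am (j+1) \<ge> lam0 * sqrt T" "ap j - ap (j+1) \<ge> lam0 * sqrt T" using ord by auto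
        moreover have "2 * W < lam0 * sqrt T" unfolding W_def using m sT by (simp add: mult_right_mono)
        ultimately show "am j - am (j+1) > 2 * W \<and> ap j - ap (j+1) > 2 * W" by linarith
      qed
      have "W < lam1 * T"
      proof -
        have "W < lam1 * sqrt T" unfolding W_def using m sT lam1 by (simp add: mult_right_mono)
        also have "\<dots> \<le> lam1 * T" using sTT lam1 by simp
        finally show ?thesis .
      qed
      then show "am k > W" "ap k > W" using topm topp gl gr by auto
    qed
    define Bv where "Bv = real (card P') * c0\<^sup>2 + W\<^sup>2 + L\<^sup>2 * (r - l)"
    have Bv: "Bv \<le> \<beta> * T ^ 3"
    proof -
      have T3: "T ^ 3 \<ge> T" "T ^ 3 \<ge> 1" using power_increasing[of 1 3 T] one_le_power[of T 3] T1 by auto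
      have "real (card P') * c0\<^sup>2 \<le> b0 * T * c0\<^sup>2" using cardP' by (simp add: mult_right_mono)
      also have "\<dots> = m\<^sup>2 / (9 * b0)" unfolding c0' Ts
        by (rule bv_aux[OF spos b0])
      also have "\<dots> \<le> m\<^sup>2 / (9 * b0) * T ^ 3" using mult_left_mono[OF T3(2), of "m\<^sup>2 / (9 * b0)"] b0 by simp
      finally have e1: "real (card P') * c0\<^sup>2 \<le> m\<^sup>2 / (9 * b0) * T ^ 3" .
      have "W\<^sup>2 = m\<^sup>2 / 9 * T" unfolding sW Ts by (rule w_aux[OF spos])
      also have "\<dots> \<le> m\<^sup>2 / 9 * T ^ 3" using T3 by (simp add: mult_left_mono)
      finally have e2: "W\<^sup>2 \<le> m\<^sup>2 / 9 * T ^ 3" .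
      have "L\<^sup>2 * (r - l) \<le> L\<^sup>2 * (b0 * T)" using rl by (simp add: mult_left_mono)
      also have "\<dots> = b1\<^sup>2 * b0 * T ^ 3" unfolding L_def by (simp add: power2_eq_square power3_eq_cube)
      finally have e3: "L\<^sup>2 * (r - l) \<le> b1\<^sup>2 * b0 * T ^ 3" .
      show ?thesis using e1 e2 e3 unfolding Bv_def \<beta>_def by (simp add: algebra_simps)
    qed
    have qq: "2 * c0 / sqrt (2 * pi) = q0 / sqrt T"
      unfolding c0' q0_def s_def[symmetric] by (rule qq_aux[OF spos b0]) simp
    have "exp (- C * T ^ 3) / C \<le> exp (- Bv) ^ k * (2 * c0 / sqrt (2 * pi)) ^ (k * card P')"
      by (rule final_arith[OF T1 cardP' Bv qq q0 \<gamma>_def C_def \<beta> b0])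
    then have "ennreal (exp (- C * T ^ 3) / C) \<le> ennreal (exp (- Bv) ^ k * (2 * c0 / sqrt (2 * pi)) ^ (k * card P'))"
      by (rule ennreal_leI)
    then show "E_free_W k l r am ap g (P \<inter> {l + sqrt T .. r - sqrt T}) \<ge> ennreal (exp (- C * T ^ 3) / C)"
      using mb unfolding Bv_def P'_def by (meson order_trans)
  qed
qed


end
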